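(* Let $q$ be a complex number with $|q|<1$. Then \[ \sum_{n\geq 0} q^{4n+1} (q^{4n+4};q^4)_\infty (q;q)_{2n} =\frac{2q^2(q^4;q^4)_\infty}{1+q^3}+ \frac{q(1-q) (q;q)_\infty}{1+q^3}, \] and \[ (1+q^3) \sum_{n\geq 0} \frac{(-q^2;q^2)_n\, q^{2n+1}}{(q;q^2)_{n}} = \frac{q^2(q^4;q^4)_\infty}{(q;q)_\infty}-q^2+q . \]
   Context: For a complex number $a$ and $|q|<1$: $(a;q)_0=1$, $(a;q)_n=\prod_{j=0}^{n-1}(1-aq^j)$ for integers $n\ge 1$, and $(a;q)_\infty=\prod_{j=0}^{\infty}(1-aq^j)$. *)

theory Defs
  imports "HOL-Analysis.Analysis"
begin

definition qpoch :: "complex \<Rightarrow> complex \<Rightarrow> nat \<Rightarrow> complex" where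
  "qpoch a q n = (\<Prod>j<n. 1 - a * q ^ j)"

definition qpoch_inf :: "complex \<Rightarrow> complex \<Rightarrow> complex" where
  "qpoch_inf a q = (\<Prod>j. 1 - a * q ^ j)"

end

theory Submission
  imports Defs
begin

lemma qp_conv:
  fixes a x :: complex
  assumes "norm x < 1"
  shows "convergent_prod (\<lambda>j. 1 - a * x ^ j)"
proof (rule abs_convergent_prod_imp_convergent_prod, rule summable_imp_abs_convergent_prod)
  have "summable (\<lambda>j. norm a * norm x ^ j)"
    using assms by (intro summable_mult summable_geometric) auto
  then show "summable (\<lambda>j. norm (1 - a * x ^ j - 1))"
    by (simp add: norm_mult norm_power)
qed

lemma qp_lim:
  fixes a x :: complex
  assumes "norm x < 1"
  shows "(\<lambda>n. qpoch a x n) \<longlonglongrightarrow> qpoch_inf a x"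
proof -
  have "(\<lambda>n. \<Prod>j\<le>n. 1 - a * x ^ j) \<longlonglongrightarrow> qpoch_inf a x"
    unfolding qpoch_inf_def by (rule convergent_prod_LIMSEQ[OF qp_conv[OF assms]])
  then have "(\<lambda>n. \<Prod>j<Suc n. 1 - a * x ^ j) \<longlonglongrightarrow> qpoch_inf a x"
    by (simp add: lessThan_Suc_atMost)
  then have "(\<lambda>n. qpoch a x (Suc n)) \<longlonglongrightarrow> qpoch_inf a x"
    by (simp add: qpoch_def)
  then show ?thesis by (rule LIMSEQ_imp_Suc)
qed

lemma qp_fact_nz:
  fixes a x :: complex
  assumes "norm a < 1" "norm x \<le> 1"
  shows "1 - a * x ^ j \<noteq> 0"
proof
  assume "1 - a * x ^ j = 0"
  then have "a * x ^ j = 1" by simp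
  then have "norm (a * x ^ j) = 1" by simp
  moreover have "norm (a * x ^ j) \<le> norm a"
    using assms by (simp add: norm_mult norm_power mult_left_le power_le_one)
  ultimately show False using assms by simp
qed

lemma qp_nz:
  fixes a x :: complex
  assumes "norm a < 1" "norm x \<le> 1"
  shows "qpoch a x n \<noteq> 0"
  unfolding qpoch_def using qp_fact_nz[OF assms] by simp

lemma qpinf_nz:
  fixes a x :: complex
  assumes "norm a < 1" "norm x < 1"
  shows "qpoch_inf a x \<noteq> 0"
  unfolding qpoch_inf_def
  using assms by (intro prodinf_nonzero qp_conv qp_fact_nz) auto

lemma qp_Suc: "qpoch a x (Suc n) = qpoch a x n * (1 - a * x ^ n)"
  by (simp add: qpoch_def)

lemma qp_even:
  fixes q :: complex
  shows "qpoch q q (2*n) = qpoch q (q^2) n * qpoch (q^2) (q^2) n"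
proof (induction n)
  case 0 then show ?case by (simp add: qpoch_def)
next
  case (Suc n)
  have e: "2 * Suc n = Suc (Suc (2*n))" by simp
  have h1: "(q^2)^n = q^(2*n)" by (simp add: power_mult)
  have h2: "q * q^(Suc (2*n)) = q^2 * q^(2*n)" by (simp add: power2_eq_square)
  show ?case unfolding e qp_Suc Suc h1 h2 by (simp add: algebra_simps)
qed

lemma qp_four:
  fixes q :: complex
  shows "qpoch (q^4) (q^4) n = qpoch (q^2) (q^2) n * qpoch (-(q^2)) (q^2) n"
proof (induction n)
  case 0 then show ?case by (simp add: qpoch_def)
next
  case (Suc n)
  have h1: "(q^2)^n = q^(2*n)" by (simp add: power_mult)
  have h2a: "q^(2*n) * q^(2*n) = q^(2*n+2*n)" by (rule power_add[symmetric])
  have h2b: "(q^4)^n = q^(4*n)" by (simp add: power_mult)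
  have h2: "(q^4)^n = q^(2*n) * q^(2*n)" unfolding h2a h2b by (simp add: algebra_simps)
  have h3: "q^4 = q^2 * q^2" by (simp add: power_add[symmetric])
  have "(1 - q^4 * (q^4)^n) = (1 - q^2 * (q^2)^n) * (1 - (-(q^2)) * (q^2)^n)"
    unfolding h2 unfolding h1 h3 by (simp add: algebra_simps)
  then show ?case unfolding qp_Suc Suc by (simp only: mult_ac)
qed


lemma lin: fixes a b x y P X Y Z W :: complex
  shows "b*(1+x) = a*(1-y) \<Longrightarrow> X = P*x \<Longrightarrow> Y = P*y \<Longrightarrow> Z = P \<Longrightarrow> W = P \<Longrightarrow> Y*a + X*b = Z*a - W*b"
  by algebra

lemma lin2: fixes a b x y P X Y :: complex
  shows "b*(1-y) = a*(1+x) \<Longrightarrow> X = P*y \<Longrightarrow> Y = P*x \<Longrightarrow> P*b - P*a = X*b + Y*a"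
  by algebra

lemma pw: "m + n = k \<Longrightarrow> (q::complex)^m * q^n = q^k"
  by (simp add: power_add[symmetric])

lemma frac1: fixes a b c u :: complex
  shows "b \<noteq> 0 \<Longrightarrow> c \<noteq> 0 \<Longrightarrow> (a*u)/(b*c) * c = a/b * u"
  by simp

lemma pw2: "a + b = c + d \<Longrightarrow> (q::complex)^a * q^b = q^c * q^d"
  by (simp add: power_add[symmetric])

lemma lin3: fixes q q3 F0 F1 F1' G0 G1 G1' a e c d :: complex
  shows "q3*F0 + F1 = q3*G0 - q*G1 + 2*q \<Longrightarrow> q3*a + e = q3*c - q*d \<Longrightarrow> F1' = F1 + e
   \<Longrightarrow> F1 = F0 + a \<Longrightarrow> G1' = G1 + d \<Longrightarrow> G1 = G0 + c \<Longrightarrow> q3*F1 + F1' = q3*G1 - q*G1' + 2*q"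
  by algebra

lemma lin4: fixes q q2 q3 t0 t1 S0 S1 S1' a e :: complex
  shows "q2*t0 - q2 = S1 - q + q3*S0 \<Longrightarrow> q2*t1 - q2*t0 = e + q3*a \<Longrightarrow> S1' = S1 + e
   \<Longrightarrow> S1 = S0 + a \<Longrightarrow> q2*t1 - q2 = S1' - q + q3*S1"
  by algebra

lemma lin5: fixes q q3 r G F A Q :: complex
  assumes h1: "r + G + q*G = 2" and h2: "q3*F + F = q3*G - q*G + 2*q" and h3: "q3 = q*q*q" and h4: "Q = r*A"
  shows "(1+q3)*(A*F) = 2*q^2*A + q*(1-q)*Q"
proof -
  have a: "(1+q)*G = 2 - r" using h1 by (simp add: algebra_simps)
  have "(1+q3)*(A*F) = A*((1+q3)*F)" by (simp add: algebra_simps)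
  also have "(1+q3)*F = q*(q-1)*((1+q)*G) + 2*q" using h2 h3 by (simp add: algebra_simps)
  also have "\<dots> = q*(q-1)*(2-r) + 2*q" using a by simp
  finally show ?thesis using h4 by (simp add: algebra_simps power2_eq_square)
qed

lemma lin6: fixes a b S q c :: complex
  shows "a - b = S - q + c*S \<Longrightarrow> (1+c)*S = a - b + q"
  by algebra

lemma bounded_summable:
  fixes s :: "nat \<Rightarrow> complex" and q :: complex
  assumes "convergent s" "norm q < 1"
  shows "summable (\<lambda>n. q ^ n * s n)"
proof -
  have "Bseq s" using assms(1) by (rule convergent_imp_Bseq)
  then obtain K where K: "K > 0" "\<And>n. norm (s n) \<le> K"
    unfolding Bseq_def by blast
  have g: "summable (\<lambda>n. K * norm q ^ n)"
    using assms(2) by (intro summable_mult summable_geometric) auto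
  have b: "norm (q ^ n * s n) \<le> K * norm q ^ n" for n
    using mult_right_mono[OF K(2)[of n], of "norm q ^ n"] by (simp add: norm_mult norm_power mult.commute)
  show ?thesis
    by (rule summable_comparison_test'[OF g]) (use b in blast)
qed

theorem theorem3:
  fixes q :: complex
  assumes "norm q < 1"
  shows "(\<Sum>n. q ^ (4*n+1) * qpoch_inf (q ^ (4*n+4)) (q ^ 4) * qpoch q q (2*n))
           = 2 * q^2 * qpoch_inf (q^4) (q^4) / (1 + q^3) + q * (1 - q) * qpoch_inf q q / (1 + q^3)
         \<and> (1 + q^3) * (\<Sum>n. qpoch (- (q^2)) (q^2) n * q ^ (2*n+1) / qpoch q (q^2) n)
           = q^2 * qpoch_inf (q^4) (q^4) / qpoch_inf q q - q^2 + q"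
proof -
  have nq2: "norm (q^2) < 1" and nq4: "norm (q^4) < 1" and nm: "norm (-(q^2)) < 1"
    using assms by (simp_all add: norm_power power_less_one_iff)
  have nq3: "1 + q^3 \<noteq> 0"
  proof
    assume "1 + q^3 = 0"
    then have "q^3 = -1" by (simp add: add_eq_0_iff)
    then have "norm (q^3) = 1" by simp
    moreover have "norm (q^3) < 1" using assms by (simp add: norm_power power_less_one_iff)
    ultimately show False by simp
  qed
  define Q where "Q = qpoch_inf q q"
  define A where "A = qpoch_inf (q^4) (q^4)"
  have QA: "Q \<noteq> 0" "A \<noteq> 0"
    unfolding Q_def A_def using qpinf_nz[OF assms assms] qpinf_nz[OF nq4 nq4] by auto
  have nzq: "qpoch q q n \<noteq> 0" "qpoch (q^4) (q^4) n \<noteq> 0" "qpoch q (q^2) n \<noteq> 0"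
     "qpoch (-(q^2)) (q^2) n \<noteq> 0" "qpoch (q^2) (q^2) n \<noteq> 0" for n
    using qp_nz[OF assms less_imp_le[OF assms], of n] qp_nz[OF nq4 less_imp_le[OF nq4], of n]
      qp_nz[OF assms less_imp_le[OF nq2], of n] qp_nz[OF nm less_imp_le[OF nq2], of n]
      qp_nz[OF nq2 less_imp_le[OF nq2], of n] by auto
  define s where "s n = qpoch q (q^2) n / qpoch (-(q^2)) (q^2) n" for n
  define t where "t n = qpoch (-(q^2)) (q^2) n / qpoch q (q^2) n" for n
  have s_alt: "s n = qpoch q q (2*n) / qpoch (q^4) (q^4) n" for n
    unfolding s_def qp_even qp_four using nzq[of n] by (simp add: field_simps)
  have t_alt: "t n = qpoch (q^4) (q^4) n / qpoch q q (2*n)" for n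
    unfolding t_def qp_even qp_four using nzq[of n] by (simp add: field_simps)
  have limQ2: "(\<lambda>n. qpoch q q (2*n)) \<longlonglongrightarrow> Q"
  proof -
    have "(\<lambda>n. qpoch q q n) \<longlonglongrightarrow> Q" unfolding Q_def using qp_lim[OF assms] .
    moreover have "strict_mono (\<lambda>n::nat. 2*n)" by (auto simp: strict_mono_def)
    ultimately show ?thesis using LIMSEQ_subseq_LIMSEQ[of "\<lambda>n. qpoch q q n" Q "\<lambda>n. 2*n"]
      by (simp add: o_def)
  qed
  have limA: "(\<lambda>n. qpoch (q^4) (q^4) n) \<longlonglongrightarrow> A" unfolding A_def using qp_lim[OF nq4] .
  have slim: "s \<longlonglongrightarrow> Q / A"
    unfolding s_alt using tendsto_divide[OF limQ2 limA QA(2)] .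
  have tlim: "t \<longlonglongrightarrow> A / Q"
    unfolding t_alt using tendsto_divide[OF limA limQ2 QA(1)] .
  have srec: "s (Suc n) * (1 + q^(2*n+2)) = s n * (1 - q^(2*n+1))" for n
  proof -
    have h: "(q^2)^n = q^(2*n)" by (simp add: power_mult)
    have a: "1 - (-(q^2)) * (q^2)^n = 1 + q^(2*n+2)"
      unfolding h using pw[of 2 "2*n" "2*n+2" q] by simp
    have b: "1 - q * (q^2)^n = 1 - q^(2*n+1)"
      unfolding h using pw[of 1 "2*n" "2*n+1" q] by simp
    have c: "1 + q^(2*n+2) \<noteq> 0" using nzq(4)[of "Suc n"] unfolding qp_Suc a by simp
    show ?thesis unfolding s_def qp_Suc a b using frac1[OF nzq(4)[of n] c] .
  qed
  have trec: "t (Suc n) * (1 - q^(2*n+1)) = t n * (1 + q^(2*n+2))" for n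
  proof -
    have h: "(q^2)^n = q^(2*n)" by (simp add: power_mult)
    have a: "1 - (-(q^2)) * (q^2)^n = 1 + q^(2*n+2)"
      unfolding h using pw[of 2 "2*n" "2*n+2" q] by simp
    have b: "1 - q * (q^2)^n = 1 - q^(2*n+1)"
      unfolding h using pw[of 1 "2*n" "2*n+1" q] by simp
    have c: "1 - q^(2*n+1) \<noteq> 0" using nzq(3)[of "Suc n"] unfolding qp_Suc b by simp
    show ?thesis unfolding t_def qp_Suc a b using frac1[OF nzq(3)[of n] c] .
  qed
  define G where "G N = (\<Sum>n<N. q^(2*n) * s n)" for N
  define F where "F N = (\<Sum>n<N. q^(4*n+1) * s n)" for N
  define S where "S N = (\<Sum>n<N. q^(2*n+1) * t n)" for N
  have id1: "s N + G (Suc N) + q * G N = 2" for N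
  proof (induction N)
    case 0 then show ?case by (simp add: G_def s_def qpoch_def)
  next
    case (Suc N)
    have "q^(2*Suc N) * s (Suc N) + s (Suc N) = s (Suc N) * (1 + q^(2*N+2))"
      by (simp add: algebra_simps)
    also have "\<dots> = s N * (1 - q^(2*N+1))" by (rule srec)
    finally have e: "q^(2*Suc N) * s (Suc N) + s (Suc N) = s N - q * (q^(2*N) * s N)"
      by (simp add: algebra_simps)
    have "s (Suc N) + G (Suc (Suc N)) + q * G (Suc N)
        = (s (Suc N) + q^(2*Suc N) * s (Suc N)) + G (Suc N) + q * G N + q * (q^(2*N) * s N)"
      by (simp add: G_def algebra_simps)
    also have "\<dots> = s N + G (Suc N) + q * G N" using e by (simp add: algebra_simps)
    finally show ?case using Suc by simp
  qed
  have id2: "q^3 * F N + F (Suc N) = q^3 * G N - q * G (Suc N) + 2 * q" for N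
  proof (induction N)
    case 0 then show ?case by (simp add: G_def F_def s_def qpoch_def)
  next
    case (Suc N)
    have r: "s (Suc N) * (1 + q^(2*N+2)) = s N * (1 - q^(2*N+1))" by (rule srec)
    have "q^3 * q^(4*N+1) * s N + q^(4*Suc N+1) * s (Suc N)
          = q^3 * q^(2*N) * s N - q * q^(2*Suc N) * s (Suc N)"
    proof (rule lin[OF r])
      show "q^(4*Suc N+1) = q^(2*N+3) * q^(2*N+2)" by (rule pw[symmetric]) simp
      show "q^3 * q^(4*N+1) = q^(2*N+3) * q^(2*N+1)" by (rule pw2) simp
      show "q^3 * q^(2*N) = q^(2*N+3)" by (rule pw) simp
      show "q * q^(2*Suc N) = q^(2*N+3)" using pw[of 1 "2*Suc N" "2*N+3" q] by simp
    qed
    then have "q^3 * (q^(4*N+1) * s N) + q^(4*Suc N+1) * s (Suc N)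
          = q^3 * (q^(2*N) * s N) - q * (q^(2*Suc N) * s (Suc N))"
      by (simp only: mult.assoc)
    moreover have "F (Suc (Suc N)) = F (Suc N) + q^(4*Suc N+1) * s (Suc N)"
      unfolding F_def by (rule sum.lessThan_Suc)
    moreover have "F (Suc N) = F N + q^(4*N+1) * s N"
      unfolding F_def by (rule sum.lessThan_Suc)
    moreover have "G (Suc (Suc N)) = G (Suc N) + q^(2*Suc N) * s (Suc N)"
      unfolding G_def by (rule sum.lessThan_Suc)
    moreover have "G (Suc N) = G N + q^(2*N) * s N"
      unfolding G_def by (rule sum.lessThan_Suc)
    ultimately show ?case
      by (rule lin3[OF Suc.IH])
  qed
  have id3: "q^2 * t N - q^2 = S (Suc N) - q + q^3 * S N" for N
  proof (induction N)
    case 0 then show ?case by (simp add: S_def t_def qpoch_def)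
  next
    case (Suc N)
    have r: "t (Suc N) * (1 - q^(2*N+1)) = t N * (1 + q^(2*N+2))" by (rule trec)
    have "q^2 * t (Suc N) - q^2 * t N = q^(2*Suc N+1) * t (Suc N) + q^3 * q^(2*N+1) * t N"
    proof (rule lin2[OF r])
      show "q^(2*Suc N+1) = q^2 * q^(2*N+1)" by (rule pw[symmetric]) simp
      show "q^3 * q^(2*N+1) = q^2 * q^(2*N+2)" by (rule pw2) simp
    qed
    then have "q^2 * t (Suc N) - q^2 * t N = q^(2*Suc N+1) * t (Suc N) + q^3 * (q^(2*N+1) * t N)"
      by (simp only: mult.assoc)
    moreover have "S (Suc (Suc N)) = S (Suc N) + q^(2*Suc N+1) * t (Suc N)"
      unfolding S_def by (rule sum.lessThan_Suc)
    moreover have "S (Suc N) = S N + q^(2*N+1) * t N"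
      unfolding S_def by (rule sum.lessThan_Suc)
    ultimately show ?case
      by (rule lin4[OF Suc.IH])
  qed
  have cs: "convergent s" using slim by (auto simp: convergent_def)
  have ct: "convergent t" using tlim by (auto simp: convergent_def)
  have sumG: "summable (\<lambda>n. q^(2*n) * s n)"
    using bounded_summable[OF cs nq2] by (simp add: power_mult)
  have sumF: "summable (\<lambda>n. q^(4*n+1) * s n)"
  proof -
    have "summable (\<lambda>n. q * ((q^4)^n * s n))"
      using bounded_summable[OF cs nq4] by (rule summable_mult)
    moreover have "q * ((q^4)^n * s n) = q^(4*n+1) * s n" for n
      using pw[of "4*n" 1 "4*n+1" q] by (simp add: power_mult[symmetric] mult_ac)
    ultimately show ?thesis by simp
  qed
  have sumS: "summable (\<lambda>n. q^(2*n+1) * t n)"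
  proof -
    have "summable (\<lambda>n. q * ((q^2)^n * t n))"
      using bounded_summable[OF ct nq2] by (rule summable_mult)
    moreover have "q * ((q^2)^n * t n) = q^(2*n+1) * t n" for n
      using pw[of "2*n" 1 "2*n+1" q] by (simp add: power_mult[symmetric] mult_ac)
    ultimately show ?thesis by simp
  qed
  define Gi where "Gi = (\<Sum>n. q^(2*n) * s n)"
  define Fi where "Fi = (\<Sum>n. q^(4*n+1) * s n)"
  define Si where "Si = (\<Sum>n. q^(2*n+1) * t n)"
  have Gl: "G \<longlonglongrightarrow> Gi" unfolding G_def Gi_def by (rule summable_LIMSEQ[OF sumG])
  have Fl: "F \<longlonglongrightarrow> Fi" unfolding F_def Fi_def by (rule summable_LIMSEQ[OF sumF])
  have Sl: "S \<longlonglongrightarrow> Si" unfolding S_def Si_def by (rule summable_LIMSEQ[OF sumS])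
  have Gl': "(\<lambda>N. G (Suc N)) \<longlonglongrightarrow> Gi" using Gl by (rule LIMSEQ_Suc)
  have Fl': "(\<lambda>N. F (Suc N)) \<longlonglongrightarrow> Fi" using Fl by (rule LIMSEQ_Suc)
  have Sl': "(\<lambda>N. S (Suc N)) \<longlonglongrightarrow> Si" using Sl by (rule LIMSEQ_Suc)
  have e1: "Q / A + Gi + q * Gi = 2"
  proof -
    have "(\<lambda>N. s N + G (Suc N) + q * G N) \<longlonglongrightarrow> Q / A + Gi + q * Gi"
      by (intro tendsto_intros slim Gl Gl')
    moreover have "(\<lambda>N. s N + G (Suc N) + q * G N) \<longlonglongrightarrow> 2" using id1 by simp
    ultimately show ?thesis using LIMSEQ_unique by blast
  qed
  have e2: "q^3 * Fi + Fi = q^3 * Gi - q * Gi + 2 * q"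
  proof -
    have "(\<lambda>N. q^3 * F N + F (Suc N)) \<longlonglongrightarrow> q^3 * Fi + Fi"
      by (intro tendsto_intros Fl Fl')
    moreover have "(\<lambda>N. q^3 * F N + F (Suc N)) \<longlonglongrightarrow> q^3 * Gi - q * Gi + 2 * q"
      unfolding id2 by (intro tendsto_intros Gl Gl')
    ultimately show ?thesis using LIMSEQ_unique by blast
  qed
  have e3: "q^2 * (A / Q) - q^2 = Si - q + q^3 * Si"
  proof -
    have "(\<lambda>N. q^2 * t N - q^2) \<longlonglongrightarrow> q^2 * (A / Q) - q^2"
      by (intro tendsto_intros tlim)
    moreover have "(\<lambda>N. q^2 * t N - q^2) \<longlonglongrightarrow> Si - q + q^3 * Si"
      unfolding id3 by (intro tendsto_intros Sl Sl')
    ultimately show ?thesis using LIMSEQ_unique by blast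
  qed
  have trm: "q ^ (4*n+1) * qpoch_inf (q ^ (4*n+4)) (q ^ 4) * qpoch q q (2*n) = A * (q^(4*n+1) * s n)" for n
  proof -
    define f where "f j = 1 - q^4 * (q^4)^j" for j
    have cf: "convergent_prod f" unfolding f_def using qp_conv[OF nq4] .
    have "A = (\<Prod>j. f (j + n)) * (\<Prod>j<n. f j)"
      unfolding A_def qpoch_inf_def f_def[symmetric]
      by (rule prodinf_split_initial_segment[OF cf]) (use qp_fact_nz[OF nq4, of "q^4"] nq4 in \<open>auto simp: f_def\<close>)
    moreover have "(\<Prod>j. f (j + n)) = qpoch_inf (q ^ (4*n+4)) (q ^ 4)"
    proof -
      have "f (j + n) = 1 - q ^ (4*n+4) * (q ^ 4) ^ j" for j
      proof -
        have "q^4 * (q^4)^(j+n) = (q^4)^(Suc n) * (q^4)^j"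
          by (simp add: power_add mult_ac)
        also have "(q^4)^(Suc n) = q^(4*n+4)" using pw[of 4 "4*n" "4*n+4" q] by (simp add: power_mult[symmetric])
        finally show ?thesis unfolding f_def by simp
      qed
      then show ?thesis unfolding qpoch_inf_def by simp
    qed
    moreover have "(\<Prod>j<n. f j) = qpoch (q^4) (q^4) n" unfolding f_def qpoch_def ..
    ultimately have "A = qpoch_inf (q ^ (4*n+4)) (q ^ 4) * qpoch (q^4) (q^4) n" by simp
    then show ?thesis unfolding s_alt using nzq[of n] by (simp add: field_simps)
  qed
  have P1: "(\<Sum>n. q ^ (4*n+1) * qpoch_inf (q ^ (4*n+4)) (q ^ 4) * qpoch q q (2*n)) = A * Fi"
    unfolding trm Fi_def by (rule suminf_mult[OF sumF])
  have P2: "(\<Sum>n. qpoch (- (q^2)) (q^2) n * q ^ (2*n+1) / qpoch q (q^2) n) = Si"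
    unfolding Si_def t_def by (simp add: algebra_simps)
  have X: "(1+q^3)*(A*Fi) = 2*q^2*A + q*(1-q)*Q"
    by (rule lin5[OF e1 e2]) (simp_all add: power3_eq_cube QA)
  then have "A*Fi = (2*q^2*A + q*(1-q)*Q)/(1+q^3)" using nq3 by (simp add: eq_divide_eq mult.commute)
  then have R1: "A * Fi = 2 * q^2 * A / (1 + q^3) + q * (1 - q) * Q / (1 + q^3)"
    by (simp add: add_divide_distrib)
  have R2: "(1 + q^3) * Si = q^2 * A / Q - q^2 + q"
    using lin6[OF e3] by simp
  show ?thesis using P1 P2 R1 R2 unfolding A_def Q_def by simp
qed

end
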